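(* Consider the following process on a finite vertex set $V=\{1,\dots,p\}$. One maintains an ordered list of cliques $[C_1,\dots,C_m]$, a forest $\mathcal{T}$ whose nodes are the cliques in the list and whose edges are labelled by separators, and a set of outstanding vertices $O=V\setminus\bigcup_i C_i$; the associated graph $G$ on $V$ has an edge between two distinct vertices iff they lie in a common $C_i$. Initially the list is a given list of nonempty subsets, arranged as a perfect sequence of sets, together with a forest on them that is a clique forest of the graph they induce (for instance a single nonempty subset with no edges). While $O\ne\emptyset$, a step chooses a clique $C_a$ in the list, a vertex $v\in O$ and a subset $S\subseteq C_a$, and then: if $S$ is a nonempty proper subset of $C_a$, the clique $C_b=S\cup\{v\}$ is appended to the list and an edge between $C_a$ and $C_b$ labelled $S$ is added to $\mathcal{T}$; if $S=C_a$, the node $C_a$ is replaced by $C_a\cup\{v\}$ (keeping its incident edges) and no edge is added; if $S=\emptyset$, the clique $\{v\}$ is appended as a new isolated node of $\mathcal{T}$; finally $v$ is removed from $O$. Then, for any such sequence of choices, the forest $\mathcal{T}$ obtained at termination is a clique forest of the final graph $G$.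
   Context: A clique of a graph is a maximal complete vertex subset. The clique (intersection) graph of $G$ has the cliques of $G$ as nodes and an edge between two cliques whenever they intersect. A clique forest of $G$ is an acyclic spanning subgraph of the clique graph (a spanning forest on the cliques) satisfying the clique-intersection property: for any two cliques $C_1,C_2$ in the same tree, $C_1\cap C_2$ is contained in every clique on the path between $C_1$ and $C_2$. A perfect sequence of sets is an ordering $[C_1,\dots,C_m]$ such that for every $i\ge2$ there is $j<i$ with $C_i\cap(C_1\cup\dots\cup C_{i-1})\subseteq C_j$, and each such intersection is complete in $G$. *)

theory Defs
  imports Main
begin

definition gverts :: "'a set list \<Rightarrow> 'a set" where
  "gverts Cs = \<Union> (set Cs)"

definition gadj :: "'a set list \<Rightarrow> 'a \<Rightarrow> 'a \<Rightarrow> bool" where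
  "gadj Cs u v \<longleftrightarrow> u \<noteq> v \<and> (\<exists>C\<in>set Cs. u \<in> C \<and> v \<in> C)"

definition complete_in :: "'a set list \<Rightarrow> 'a set \<Rightarrow> bool" where
  "complete_in Cs K \<longleftrightarrow> K \<subseteq> gverts Cs \<and> (\<forall>u\<in>K. \<forall>v\<in>K. u \<noteq> v \<longrightarrow> gadj Cs u v)"

definition is_clique :: "'a set list \<Rightarrow> 'a set \<Rightarrow> bool" where
  "is_clique Cs K \<longleftrightarrow> complete_in Cs K \<and> (\<forall>K'. complete_in Cs K' \<and> K \<subseteq> K' \<longrightarrow> K' = K)"

(* Forests on the nodes {0..<length Cs} (node i is the clique Cs!i);
   undirected edges are 2-element sets of indices. *)
definition epath :: "nat set set \<Rightarrow> nat list \<Rightarrow> bool" where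
  "epath E xs \<longleftrightarrow> xs \<noteq> [] \<and> distinct xs \<and>
     (\<forall>i. Suc i < length xs \<longrightarrow> {xs ! i, xs ! Suc i} \<in> E)"

definition acyclic_edges :: "nat set set \<Rightarrow> bool" where
  "acyclic_edges E \<longleftrightarrow> (\<forall>xs. epath E xs \<and> length xs \<ge> 3 \<longrightarrow> {last xs, hd xs} \<notin> E)"

definition clique_forest :: "'a set list \<Rightarrow> nat set set \<Rightarrow> bool" where
  "clique_forest Cs E \<longleftrightarrow>
     \<comment> \<open>the nodes are exactly the cliques of the graph, each once\<close>
     distinct Cs \<and> set Cs = {K. is_clique Cs K} \<and>
     \<comment> \<open>edges are edges of the clique intersection graph\<close>
     (\<forall>e\<in>E. \<exists>i j. e = {i, j} \<and> i \<noteq> j \<and> i < length Cs \<and> j < length Cs \<and>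
                   Cs ! i \<inter> Cs ! j \<noteq> {}) \<and>
     acyclic_edges E \<and>
     \<comment> \<open>clique-intersection property\<close>
     (\<forall>xs. epath E xs \<longrightarrow> (\<forall>k\<in>set xs. Cs ! hd xs \<inter> Cs ! last xs \<subseteq> Cs ! k))"

definition perfect_sequence :: "'a set list \<Rightarrow> bool" where
  "perfect_sequence Cs \<longleftrightarrow>
     (\<forall>i. 0 < i \<and> i < length Cs \<longrightarrow>
        (\<exists>j<i. Cs ! i \<inter> (\<Union>k<i. Cs ! k) \<subseteq> Cs ! j) \<and>
        complete_in Cs (Cs ! i \<inter> (\<Union>k<i. Cs ! k)))"

(* One step of the process on V = {1..p}; the outstanding set is
   O = V - union of the cliques. *)
inductive step :: "nat \<Rightarrow> nat set list \<times> nat set set \<Rightarrow> nat set list \<times> nat set set \<Rightarrow> bool"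
  for p :: nat where
  proper: "\<lbrakk> a < length Cs; v \<in> {1..p} - \<Union>(set Cs); S \<noteq> {}; S \<subset> Cs ! a \<rbrakk>
     \<Longrightarrow> step p (Cs, E) (Cs @ [S \<union> {v}], insert {a, length Cs} E)"
  \<comment> \<open>case S = C_a\<close>
| full: "\<lbrakk> a < length Cs; v \<in> {1..p} - \<Union>(set Cs) \<rbrakk>
     \<Longrightarrow> step p (Cs, E) (Cs[a := Cs ! a \<union> {v}], E)"
  \<comment> \<open>case S = {}\<close>
| empty: "\<lbrakk> a < length Cs; v \<in> {1..p} - \<Union>(set Cs) \<rbrakk>
     \<Longrightarrow> step p (Cs, E) (Cs @ [{v}], E)"

end

theory Submission
  imports Defs
begin

lemma gverts_app: "gverts (Cs @ [X]) = gverts Cs \<union> X" by (auto simp: gverts_def)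
lemma gadj_app: "gadj (Cs @ [X]) u w \<longleftrightarrow> gadj Cs u w \<or> (u \<noteq> w \<and> u \<in> X \<and> w \<in> X)"
  by (auto simp: gadj_def)

lemma complete_app:
  assumes v: "v \<notin> gverts Cs" and T: "complete_in Cs T"
  shows "complete_in (Cs @ [T \<union> {v}]) K \<longleftrightarrow> (v \<notin> K \<and> complete_in Cs K) \<or> (v \<in> K \<and> K \<subseteq> T \<union> {v})"
proof
  assume H: "complete_in (Cs @ [T \<union> {v}]) K"
  show "(v \<notin> K \<and> complete_in Cs K) \<or> (v \<in> K \<and> K \<subseteq> T \<union> {v})"
  proof (cases "v \<in> K")
    case True
    have "K \<subseteq> T \<union> {v}"
    proof
      fix u assume u: "u \<in> K"
      show "u \<in> T \<union> {v}"
      proof (cases "u = v")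
        case False
        then have "gadj (Cs @ [T \<union> {v}]) u v" using H u True unfolding complete_in_def by blast
        moreover have "\<not> gadj Cs u v" using v unfolding gadj_def gverts_def by blast
        ultimately show ?thesis unfolding gadj_app by blast
      qed simp
    qed
    then show ?thesis using True by blast
  next
    case False
    have Tg: "T \<subseteq> gverts Cs" and Ta: "\<forall>u\<in>T. \<forall>w\<in>T. u \<noteq> w \<longrightarrow> gadj Cs u w"
      using T unfolding complete_in_def by auto
    have "K \<subseteq> gverts Cs" using H False Tg unfolding complete_in_def gverts_app by blast
    moreover have "\<forall>u\<in>K. \<forall>w\<in>K. u \<noteq> w \<longrightarrow> gadj Cs u w"
      using H False Ta unfolding complete_in_def gadj_app by blast
    ultimately show ?thesis using False unfolding complete_in_def by blast
  qed
next
  assume "(v \<notin> K \<and> complete_in Cs K) \<or> (v \<in> K \<and> K \<subseteq> T \<union> {v})"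
  then show "complete_in (Cs @ [T \<union> {v}]) K"
  proof
    assume "v \<notin> K \<and> complete_in Cs K" then show ?thesis
      unfolding complete_in_def gverts_app gadj_app by blast
  next
    assume "v \<in> K \<and> K \<subseteq> T \<union> {v}"
    then show ?thesis using T unfolding complete_in_def gverts_app gadj_app by blast
  qed
qed

lemma clique_app:
  assumes v: "v \<notin> gverts Cs" and T: "complete_in Cs T"
  shows "is_clique (Cs @ [T \<union> {v}]) K \<longleftrightarrow> K = T \<union> {v} \<or> (is_clique Cs K \<and> \<not> K \<subseteq> T)"
proof
  note ca = complete_app[OF v T]
  have Tg: "T \<subseteq> gverts Cs" using T unfolding complete_in_def by auto
  assume cl: "is_clique (Cs @ [T \<union> {v}]) K"
  then have cK: "complete_in (Cs @ [T \<union> {v}]) K" and mx: "\<And>K'. complete_in (Cs @ [T \<union> {v}]) K' \<Longrightarrow> K \<subseteq> K' \<Longrightarrow> K' = K"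
    unfolding is_clique_def by auto
  show "K = T \<union> {v} \<or> (is_clique Cs K \<and> \<not> K \<subseteq> T)"
  proof (cases "v \<in> K")
    case True
    then have "K \<subseteq> T \<union> {v}" using cK ca by blast
    moreover have "complete_in (Cs @ [T \<union> {v}]) (T \<union> {v})" using ca by blast
    ultimately show ?thesis using mx by blast
  next
    case False
    then have c0: "complete_in Cs K" using cK ca by blast
    have "is_clique Cs K" unfolding is_clique_def
    proof (intro conjI c0 allI impI)
      fix K' assume "complete_in Cs K' \<and> K \<subseteq> K'"
      moreover then have "v \<notin> K'" using v unfolding complete_in_def by blast
      ultimately show "K' = K" using mx ca by blast
    qed
    moreover have "\<not> K \<subseteq> T"
    proof
      assume "K \<subseteq> T"
      then have "complete_in (Cs @ [T \<union> {v}]) (insert v K)" using ca by blast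
      then have "insert v K = K" using mx by blast
      then show False using False by blast
    qed
    ultimately show ?thesis by blast
  qed
next
  note ca = complete_app[OF v T]
  assume "K = T \<union> {v} \<or> (is_clique Cs K \<and> \<not> K \<subseteq> T)"
  then show "is_clique (Cs @ [T \<union> {v}]) K"
  proof
    assume K: "K = T \<union> {v}"
    show ?thesis unfolding is_clique_def
    proof (intro conjI allI impI)
      show "complete_in (Cs @ [T \<union> {v}]) K" using ca K by blast
      fix K' assume "complete_in (Cs @ [T \<union> {v}]) K' \<and> K \<subseteq> K'"
      then show "K' = K" using ca K by blast
    qed
  next
    assume K: "is_clique Cs K \<and> \<not> K \<subseteq> T"
    then have c0: "complete_in Cs K" and mx: "\<And>K'. complete_in Cs K' \<Longrightarrow> K \<subseteq> K' \<Longrightarrow> K' = K"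
      unfolding is_clique_def by auto
    have vK: "v \<notin> K" using c0 v unfolding complete_in_def by blast
    show ?thesis unfolding is_clique_def
    proof (intro conjI allI impI)
      show "complete_in (Cs @ [T \<union> {v}]) K" using ca c0 vK by blast
      fix K' assume H: "complete_in (Cs @ [T \<union> {v}]) K' \<and> K \<subseteq> K'"
      show "K' = K"
      proof (cases "v \<in> K'")
        case True
        then have "K' \<subseteq> T \<union> {v}" using H ca by blast
        then have "K \<subseteq> T" using H vK by blast
        then show ?thesis using K by blast
      next
        case False
        then show ?thesis using H ca mx by blast
      qed
    qed
  qed
qed

lemma is_clique_cong:
  assumes "gverts A = gverts B" "\<And>u w. gadj A u w = gadj B u w"
  shows "is_clique A = is_clique B"
  using assms unfolding is_clique_def complete_in_def by simp

lemma complete_subset: "complete_in Cs K \<Longrightarrow> T \<subseteq> K \<Longrightarrow> complete_in Cs T"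
  unfolding complete_in_def by blast

lemma member_complete: "C \<in> set Cs \<Longrightarrow> complete_in Cs C"
  unfolding complete_in_def gverts_def gadj_def by blast

lemma epath_mem_edge:
  assumes "epath E xs" "2 \<le> length xs" "x \<in> set xs"
  shows "\<exists>e\<in>E. x \<in> e"
proof -
  obtain i where i: "i < length xs" "xs ! i = x" using assms(3) by (auto simp: in_set_conv_nth)
  show ?thesis
  proof (cases "Suc i < length xs")
    case True
    then show ?thesis using assms(1) i unfolding epath_def by blast
  next
    case False
    then have "Suc (i - 1) < length xs" "Suc (i - 1) = i" using i assms(2) by auto
    then have "{xs ! (i-1), xs ! i} \<in> E" using assms(1) unfolding epath_def by metis
    then show ?thesis using i by blast
  qed
qed

lemma epath_rev: "epath E xs \<Longrightarrow> epath E (rev xs)"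
  unfolding epath_def
proof (intro conjI allI impI; (elim conjE)?)
  fix i assume ne: "xs \<noteq> []" and d: "distinct xs" and ed: "\<forall>i. Suc i < length xs \<longrightarrow> {xs ! i, xs ! Suc i} \<in> E"
    and i: "Suc i < length (rev xs)"
  define j where "j = length xs - Suc (Suc i)"
  have j: "Suc j < length xs" "Suc j = length xs - Suc i" using i unfolding j_def by auto
  have "rev xs ! i = xs ! Suc j" "rev xs ! Suc i = xs ! j" using i j unfolding j_def by (auto simp: rev_nth)
  then show "{rev xs ! i, rev xs ! Suc i} \<in> E" using ed j by (metis insert_commute)
qed auto

lemma epath_tl: assumes "epath E xs" "2 \<le> length xs" shows "epath E (tl xs)"
proof -
  obtain x ys where xs: "xs = x # ys" using assms by (cases xs) auto
  have ed: "\<forall>i. Suc i < length xs \<longrightarrow> {xs ! i, xs ! Suc i} \<in> E" and d: "distinct xs"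
    using assms(1) unfolding epath_def by auto
  have "\<forall>i. Suc i < length ys \<longrightarrow> {ys ! i, ys ! Suc i} \<in> E"
  proof (intro allI impI)
    fix i assume "Suc i < length ys"
    then show "{ys ! i, ys ! Suc i} \<in> E" using ed[rule_format, of "Suc i"] unfolding xs by simp
  qed
  then show ?thesis using assms(2) d unfolding xs epath_def by auto
qed

lemma epath_sub: "epath (insert e E) xs \<Longrightarrow> (\<forall>i. Suc i < length xs \<longrightarrow> {xs!i, xs!Suc i} \<noteq> e) \<Longrightarrow> epath E xs"
  unfolding epath_def by blast

lemma epath_sub2: "epath (insert {a,n} E) xs \<Longrightarrow> n \<notin> set xs \<Longrightarrow> epath E xs"
proof (erule epath_sub, intro allI impI)
  fix i assume "n \<notin> set xs" "Suc i < length xs"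
  then have "xs ! i \<noteq> n" "xs ! Suc i \<noteq> n" using nth_mem[of i xs] nth_mem[of "Suc i" xs] by auto
  then show "{xs ! i, xs ! Suc i} \<noteq> {a, n}" by (auto simp: doubleton_eq_iff)
qed

lemma nbr: assumes "{x, n} \<in> insert {a, n} E" "\<forall>e\<in>E. n \<notin> e" "a \<noteq> n" shows "x = a"
proof -
  have "{x, n} \<notin> E" using assms(2) by blast
  then have e: "{x, n} = {a, n}" using assms(1) by blast
  then have "x \<in> {a, n}" "a \<in> {x, n}" by blast+
  then show ?thesis using assms(3) by blast
qed

lemma leaf_end:
  assumes p: "epath (insert {a,n} E) xs" and E: "\<forall>e\<in>E. n \<notin> e" and an: "a \<noteq> n"
    and j: "j < length xs" "xs ! j = n"
  shows "j = 0 \<or> j = length xs - 1"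
proof (rule ccontr)
  assume "\<not> (j = 0 \<or> j = length xs - 1)"
  then have j1: "Suc (j - 1) = j" "Suc j < length xs" using j by auto
  have "Suc (j-1) < length xs" using j1 by simp
  then have "{xs ! (j-1), xs ! Suc (j-1)} \<in> insert {a,n} E" using p unfolding epath_def by blast
  then have "{xs ! (j-1), xs ! j} \<in> insert {a,n} E" using j1(1) by simp
  then have "{xs ! (j-1), n} \<in> insert {a,n} E" using j(2) by simp
  then have A: "xs ! (j-1) = a" using nbr[OF _ E an] by blast
  have "{xs ! j, xs ! Suc j} \<in> insert {a,n} E" using p j1 unfolding epath_def by blast
  then have "{xs ! Suc j, n} \<in> insert {a,n} E" using j by (simp add: insert_commute)
  then have B: "xs ! Suc j = a" using nbr[OF _ E an] by blast
  have "distinct xs" using p unfolding epath_def by blast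
  moreover have "j - 1 < length xs" using j1 by simp
  ultimately have "j - 1 = Suc j" using A B j1(2) nth_eq_iff_index_eq[of xs "j-1" "Suc j"] by simp
  then show False by simp
qed


lemma cfD1: "clique_forest Cs E \<Longrightarrow> distinct Cs"
  unfolding clique_forest_def by (elim conjE) assumption
lemma cfD2: "clique_forest Cs E \<Longrightarrow> set Cs = {K. is_clique Cs K}"
  unfolding clique_forest_def by (elim conjE) assumption
lemma cfD3: "clique_forest Cs E \<Longrightarrow> e \<in> E \<Longrightarrow> \<exists>i j. e = {i, j} \<and> i \<noteq> j \<and> i < length Cs \<and> j < length Cs \<and>
                   Cs ! i \<inter> Cs ! j \<noteq> {}"
  unfolding clique_forest_def by (elim conjE) (erule bspec)
lemma cfD4: "clique_forest Cs E \<Longrightarrow> acyclic_edges E"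
  unfolding clique_forest_def by (elim conjE) assumption
lemma cfD5: "clique_forest Cs E \<Longrightarrow> epath E xs \<Longrightarrow> k \<in> set xs \<Longrightarrow> Cs ! hd xs \<inter> Cs ! last xs \<subseteq> Cs ! k"
  unfolding clique_forest_def by (elim conjE) (drule spec[of _ xs], drule mp, assumption, erule bspec)
lemma cfI: "distinct Cs \<Longrightarrow> set Cs = {K. is_clique Cs K} \<Longrightarrow>
   (\<forall>e\<in>E. \<exists>i j. e = {i, j} \<and> i \<noteq> j \<and> i < length Cs \<and> j < length Cs \<and> Cs ! i \<inter> Cs ! j \<noteq> {}) \<Longrightarrow>
   acyclic_edges E \<Longrightarrow> (\<forall>xs. epath E xs \<longrightarrow> (\<forall>k\<in>set xs. Cs ! hd xs \<inter> Cs ! last xs \<subseteq> Cs ! k)) \<Longrightarrow>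
   clique_forest Cs E"
  unfolding clique_forest_def by (intro conjI)

definition inv_cf :: "'a set list \<Rightarrow> nat set set \<Rightarrow> bool" where
  "inv_cf Cs E \<longleftrightarrow> clique_forest Cs E \<and> (\<forall>C\<in>set Cs. C \<noteq> {})"

lemma path_lt: "clique_forest Cs E \<Longrightarrow> epath E xs \<Longrightarrow> 2 \<le> length xs \<Longrightarrow> x \<in> set xs \<Longrightarrow> x < length Cs"
proof -
  assume cf: "clique_forest Cs E" and p: "epath E xs" "2 \<le> length xs" and x: "x \<in> set xs"
  obtain e where e: "e \<in> E" "x \<in> e" using epath_mem_edge[OF p x] by blast
  obtain i j where "e = {i, j}" "i < length Cs" "j < length Cs" using cfD3[OF cf e(1)] by blast
  then show "x < length Cs" using e(2) by blast
qed

lemma hd_last_ne: assumes "distinct xs" "2 \<le> length xs" shows "hd xs \<noteq> last xs"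
proof -
  obtain x ys where xs: "xs = x # ys" using assms by (cases xs) auto
  have "ys \<noteq> []" using assms(2) xs by auto
  then have "last xs = last ys" "last ys \<in> set ys" using xs by auto
  then show ?thesis using assms(1) xs by auto
qed

lemma epath_single: "epath E xs \<Longrightarrow> \<not> 2 \<le> length xs \<Longrightarrow> \<exists>x. xs = [x]"
  unfolding epath_def by (cases xs; cases "tl xs") auto

lemma cip_transfer:
  assumes cf: "clique_forest Cs E" and p: "epath E xs"
    and A: "\<forall>i<length Cs. \<forall>j<length Cs. i \<noteq> j \<longrightarrow> Cs'!i \<inter> Cs'!j \<subseteq> Cs!i \<inter> Cs!j"
    and B: "\<forall>i<length Cs. Cs!i \<subseteq> Cs'!i" and k: "k \<in> set xs"
  shows "Cs'!hd xs \<inter> Cs'!last xs \<subseteq> Cs'!k"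
proof (cases "2 \<le> length xs")
  case False
  then obtain x where "xs = [x]" using epath_single p by blast
  then show ?thesis using k by auto
next
  case True
  have lt: "\<And>x. x \<in> set xs \<Longrightarrow> x < length Cs" using path_lt[OF cf p True] by blast
  have ne: "xs \<noteq> []" using True by auto
  have hl: "hd xs \<noteq> last xs" using hd_last_ne True p unfolding epath_def by blast
  have "Cs'!hd xs \<inter> Cs'!last xs \<subseteq> Cs!hd xs \<inter> Cs!last xs"
    using A hl lt ne by simp
  also have "\<dots> \<subseteq> Cs!k" using cfD5[OF cf p k] .
  also have "\<dots> \<subseteq> Cs'!k" using B lt k by blast
  finally show ?thesis .
qed

lemma inv_full:
  assumes inv: "inv_cf Cs E" and a: "a < length Cs" and v: "v \<notin> \<Union>(set Cs)"
  shows "inv_cf (Cs[a := Cs!a \<union> {v}]) E"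
proof -
  define X where "X = Cs!a \<union> {v}"
  define Cs' where "Cs' = Cs[a := X]"
  have cf: "clique_forest Cs E" and nemp: "\<forall>C\<in>set Cs. C \<noteq> {}" using inv unfolding inv_cf_def by auto
  have d: "distinct Cs" and cl: "set Cs = {K. is_clique Cs K}" using cfD1[OF cf] cfD2[OF cf] by auto
  have vg: "v \<notin> gverts Cs" using v unfolding gverts_def by blast
  have Ta: "complete_in Cs (Cs!a)" using member_complete[OF nth_mem[OF a]] .
  have sCs': "set Cs' = insert X (set Cs - {Cs!a})" unfolding Cs'_def using set_update_distinct[OF d a] .
  have Xn: "X \<notin> set Cs" using v unfolding X_def by blast
  have dist': "distinct Cs'" unfolding Cs'_def using distinct_list_update[OF d] Xn by blast
  have aX: "Cs!a \<subseteq> X" unfolding X_def by blast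
  have aIn: "Cs!a \<in> set Cs" using a by simp
  have gv: "gverts Cs' = gverts (Cs @ [X])" unfolding gverts_def sCs' using aX aIn by auto
  have ga: "\<And>u w. gadj Cs' u w = gadj (Cs @ [X]) u w" unfolding gadj_def sCs' using aX aIn by auto
  have icl: "is_clique Cs' = is_clique (Cs @ [X])" using is_clique_cong[OF gv ga] .
  have sub: "\<And>K. K \<in> set Cs \<Longrightarrow> K \<subseteq> Cs!a \<Longrightarrow> K = Cs!a"
    using cl Ta unfolding is_clique_def by blast
  have "\<And>K. is_clique Cs' K \<longleftrightarrow> K \<in> set Cs'"
  proof -
    fix K
    have "is_clique Cs' K \<longleftrightarrow> K = X \<or> (is_clique Cs K \<and> \<not> K \<subseteq> Cs!a)"
      unfolding icl X_def using clique_app[OF vg Ta] by simp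
    also have "\<dots> \<longleftrightarrow> K \<in> set Cs'" unfolding sCs' using cl sub by auto
    finally show "is_clique Cs' K \<longleftrightarrow> K \<in> set Cs'" .
  qed
  then have cl': "set Cs' = {K. is_clique Cs' K}" by auto
  have len: "length Cs' = length Cs" unfolding Cs'_def by simp
  have nth': "\<And>i. i < length Cs \<Longrightarrow> Cs'!i = (if i = a then X else Cs!i)"
    unfolding Cs'_def by (simp add: nth_list_update)
  have B: "\<forall>i<length Cs. Cs!i \<subseteq> Cs'!i" using nth' aX by auto
  have vi: "\<And>i. i < length Cs \<Longrightarrow> v \<notin> Cs!i" using v by (meson UnionI nth_mem)
  have A: "\<forall>i<length Cs. \<forall>j<length Cs. i \<noteq> j \<longrightarrow> Cs'!i \<inter> Cs'!j \<subseteq> Cs!i \<inter> Cs!j"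
  proof (intro allI impI)
    fix i j assume ij: "i < length Cs" "j < length Cs" "i \<noteq> j"
    show "Cs'!i \<inter> Cs'!j \<subseteq> Cs!i \<inter> Cs!j"
    proof (cases "i = a")
      case True
      then have "Cs'!i = Cs!i \<union> {v}" "Cs'!j = Cs!j" using nth' ij unfolding X_def by auto
      then show ?thesis using vi[OF ij(2)] by blast
    next
      case False
      then have "Cs'!i = Cs!i" using nth' ij by auto
      moreover have "Cs'!j \<subseteq> Cs!j \<union> {v}" using nth' ij unfolding X_def by auto
      ultimately show ?thesis using vi[OF ij(1)] by blast
    qed
  qed
  have edges: "\<forall>e\<in>E. \<exists>i j. e = {i, j} \<and> i \<noteq> j \<and> i < length Cs' \<and> j < length Cs' \<and>
                   Cs' ! i \<inter> Cs' ! j \<noteq> {}"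
  proof
    fix e assume "e \<in> E"
    then obtain i j where ij: "e = {i, j}" "i \<noteq> j" "i < length Cs" "j < length Cs" "Cs ! i \<inter> Cs ! j \<noteq> {}"
      using cfD3[OF cf] by blast
    have "Cs!i \<subseteq> Cs'!i" "Cs!j \<subseteq> Cs'!j" using B ij(3,4) by simp_all
    then have "Cs' ! i \<inter> Cs' ! j \<noteq> {}" using ij(5) by blast
    moreover have "i < length Cs'" "j < length Cs'" using ij(3,4) len by simp_all
    ultimately show "\<exists>i j. e = {i, j} \<and> i \<noteq> j \<and> i < length Cs' \<and> j < length Cs' \<and> Cs' ! i \<inter> Cs' ! j \<noteq> {}"
      using ij(1,2) by blast
  qed
  have ac: "acyclic_edges E" using cfD4[OF cf] .
  have cip: "\<forall>xs. epath E xs \<longrightarrow> (\<forall>k\<in>set xs. Cs' ! hd xs \<inter> Cs' ! last xs \<subseteq> Cs' ! k)"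
    using cip_transfer[OF cf _ A B] by blast
  have "\<forall>C\<in>set Cs'. C \<noteq> {}" using sCs' nemp unfolding X_def by auto
  moreover have "clique_forest Cs' E" by (rule cfI[OF dist' cl' edges ac cip])
  ultimately show ?thesis unfolding inv_cf_def Cs'_def X_def by blast
qed

lemma inv_empty:
  assumes inv: "inv_cf Cs E" and a: "a < length Cs" and v: "v \<notin> \<Union>(set Cs)"
  shows "inv_cf (Cs @ [{v}]) E"
proof -
  define Cs' where "Cs' = Cs @ [{v}]"
  have cf: "clique_forest Cs E" and nemp: "\<forall>C\<in>set Cs. C \<noteq> {}" using inv unfolding inv_cf_def by auto
  have d: "distinct Cs" and cl: "set Cs = {K. is_clique Cs K}" using cfD1[OF cf] cfD2[OF cf] by auto
  have vg: "v \<notin> gverts Cs" using v unfolding gverts_def by blast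
  have T: "complete_in Cs {}" unfolding complete_in_def by simp
  have dist': "distinct Cs'" unfolding Cs'_def using d v by auto
  have "\<And>K. is_clique Cs' K \<longleftrightarrow> K \<in> set Cs'"
  proof -
    fix K
    have "is_clique Cs' K \<longleftrightarrow> K = {v} \<or> (is_clique Cs K \<and> \<not> K \<subseteq> {})"
      unfolding Cs'_def using clique_app[OF vg T] by simp
    also have "\<dots> \<longleftrightarrow> K \<in> set Cs'" unfolding Cs'_def using cl nemp by auto
    finally show "is_clique Cs' K \<longleftrightarrow> K \<in> set Cs'" .
  qed
  then have cl': "set Cs' = {K. is_clique Cs' K}" by auto
  have nth': "\<And>i. i < length Cs \<Longrightarrow> Cs'!i = Cs!i" unfolding Cs'_def by (simp add: nth_append)
  have B: "\<forall>i<length Cs. Cs!i \<subseteq> Cs'!i" using nth' by auto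
  have A: "\<forall>i<length Cs. \<forall>j<length Cs. i \<noteq> j \<longrightarrow> Cs'!i \<inter> Cs'!j \<subseteq> Cs!i \<inter> Cs!j"
    using nth' by auto
  have len: "length Cs \<le> length Cs'" unfolding Cs'_def by simp
  have edges: "\<forall>e\<in>E. \<exists>i j. e = {i, j} \<and> i \<noteq> j \<and> i < length Cs' \<and> j < length Cs' \<and>
                   Cs' ! i \<inter> Cs' ! j \<noteq> {}"
  proof
    fix e assume "e \<in> E"
    then obtain i j where "e = {i, j}" "i \<noteq> j" "i < length Cs" "j < length Cs" "Cs ! i \<inter> Cs ! j \<noteq> {}"
      using cfD3[OF cf] by blast
    then show "\<exists>i j. e = {i, j} \<and> i \<noteq> j \<and> i < length Cs' \<and> j < length Cs' \<and> Cs' ! i \<inter> Cs' ! j \<noteq> {}"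
      using nth' len by (metis order_less_le_trans)
  qed
  have ac: "acyclic_edges E" using cfD4[OF cf] .
  have cip: "\<forall>xs. epath E xs \<longrightarrow> (\<forall>k\<in>set xs. Cs' ! hd xs \<inter> Cs' ! last xs \<subseteq> Cs' ! k)"
    using cip_transfer[OF cf _ A B] by blast
  have "\<forall>C\<in>set Cs'. C \<noteq> {}" using nemp unfolding Cs'_def by auto
  moreover have "clique_forest Cs' E" by (rule cfI[OF dist' cl' edges ac cip])
  ultimately show ?thesis unfolding inv_cf_def Cs'_def by blast
qed


lemma acyc_leaf:
  assumes ac: "acyclic_edges E" and En: "\<forall>e\<in>E. n \<notin> e" and an: "a \<noteq> n"
  shows "acyclic_edges (insert {a,n} E)"
  unfolding acyclic_edges_def
proof (intro allI impI notI)
  fix xs assume H: "epath (insert {a,n} E) xs \<and> 3 \<le> length xs"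
    and c: "{last xs, hd xs} \<in> insert {a,n} E"
  have p: "epath (insert {a,n} E) xs" and l3: "3 \<le> length xs" using H by auto
  have d: "distinct xs" and ed: "\<forall>i. Suc i < length xs \<longrightarrow> {xs ! i, xs ! Suc i} \<in> insert {a,n} E"
    using p unfolding epath_def by auto
  have ne: "xs \<noteq> []" using l3 by auto
  show False
  proof (cases "n \<in> set xs")
    case True
    then obtain j where j: "j < length xs" "xs ! j = n" by (auto simp: in_set_conv_nth)
    from leaf_end[OF p En an j] show False
    proof
      assume j0: "j = 0"
      then have "hd xs = n" using j ne by (simp add: hd_conv_nth)
      then have la: "last xs = a" using c nbr[OF _ En an] by simp
      have "{xs ! 0, xs ! Suc 0} \<in> insert {a,n} E" using ed l3 by auto
      then have "{xs ! 1, n} \<in> insert {a,n} E" using j j0 by (simp add: insert_commute)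
      then have "xs ! 1 = a" using nbr[OF _ En an] by blast
      then have "xs ! 1 = xs ! (length xs - 1)" using la ne by (simp add: last_conv_nth)
      then have "1 = length xs - 1" using nth_eq_iff_index_eq[OF d, of 1 "length xs - 1"] l3 by auto
      then show False using l3 by simp
    next
      assume jl: "j = length xs - 1"
      then have ln: "last xs = n" using j ne by (simp add: last_conv_nth)
      then have "{hd xs, n} \<in> insert {a,n} E" using c by (simp add: insert_commute)
      then have ha: "hd xs = a" using nbr[OF _ En an] by blast
      have "Suc (length xs - 2) < length xs" using l3 by simp
      then have "{xs ! (length xs - 2), xs ! Suc (length xs - 2)} \<in> insert {a,n} E" using ed by blast
      moreover have "Suc (length xs - 2) = j" using jl l3 by simp
      ultimately have "{xs ! (length xs - 2), n} \<in> insert {a,n} E" using j by simp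
      then have "xs ! (length xs - 2) = a" using nbr[OF _ En an] by blast
      then have "xs ! 0 = xs ! (length xs - 2)" using ha ne by (simp add: hd_conv_nth)
      moreover have "0 < length xs" "length xs - 2 < length xs" using l3 by auto
      ultimately have "0 = length xs - 2" using nth_eq_iff_index_eq[OF d, of 0 "length xs - 2"] by simp
      then show False using l3 by simp
    qed
  next
    case False
    have pE: "epath E xs" using epath_sub2[OF p False] .
    have "last xs \<in> set xs" "hd xs \<in> set xs" using ne by auto
    then have "{last xs, hd xs} \<noteq> {a, n}"
    proof (intro notI)
      assume m: "last xs \<in> set xs" "hd xs \<in> set xs" and eq: "{last xs, hd xs} = {a, n}"
      have "n \<in> {last xs, hd xs}" unfolding eq by simp
      then show False using m False by auto
    qed
    then have "{last xs, hd xs} \<in> E" using c by blast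
    then show False using ac pE l3 unfolding acyclic_edges_def by blast
  qed
qed

lemma inv_proper:
  assumes inv: "inv_cf Cs E" and a: "a < length Cs" and v: "v \<notin> \<Union>(set Cs)"
    and Sne: "S \<noteq> {}" and Sa: "S \<subset> Cs ! a"
  shows "inv_cf (Cs @ [S \<union> {v}]) (insert {a, length Cs} E)"
proof -
  define n where "n = length Cs"
  define X where "X = S \<union> {v}"
  define Cs' where "Cs' = Cs @ [X]"
  define E' where "E' = insert {a, n} E"
  have cf: "clique_forest Cs E" and nemp: "\<forall>C\<in>set Cs. C \<noteq> {}" using inv unfolding inv_cf_def by auto
  have d: "distinct Cs" and cl: "set Cs = {K. is_clique Cs K}" using cfD1[OF cf] cfD2[OF cf] by auto
  have vg: "v \<notin> gverts Cs" using v unfolding gverts_def by blast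
  have Ta: "complete_in Cs (Cs!a)" using member_complete[OF nth_mem[OF a]] .
  have T: "complete_in Cs S" using complete_subset[OF Ta] Sa by blast
  have dist': "distinct Cs'" unfolding Cs'_def X_def using d v by auto
  have sub: "\<And>K. K \<in> set Cs \<Longrightarrow> K \<subseteq> Cs!a \<Longrightarrow> K = Cs!a"
    using cl Ta unfolding is_clique_def by blast
  have "\<And>K. is_clique Cs' K \<longleftrightarrow> K \<in> set Cs'"
  proof -
    fix K
    have "is_clique Cs' K \<longleftrightarrow> K = X \<or> (is_clique Cs K \<and> \<not> K \<subseteq> S)"
      unfolding Cs'_def X_def using clique_app[OF vg T] by simp
    also have "\<dots> \<longleftrightarrow> K \<in> set Cs'" unfolding Cs'_def using cl sub Sa by auto
    finally show "is_clique Cs' K \<longleftrightarrow> K \<in> set Cs'" .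
  qed
  then have cl': "set Cs' = {K. is_clique Cs' K}" by auto
  have nth': "\<And>i. i < n \<Longrightarrow> Cs'!i = Cs!i" unfolding Cs'_def n_def by (simp add: nth_append)
  have nthn: "Cs'!n = X" unfolding Cs'_def n_def by simp
  have len: "length Cs' = Suc n" unfolding Cs'_def n_def by simp
  have an: "a \<noteq> n" using a n_def by simp
  have an': "a < n" using a n_def by simp
  have vi: "\<And>i. i < n \<Longrightarrow> v \<notin> Cs!i" using v n_def by (meson UnionI nth_mem)
  have oldE: "\<forall>e\<in>E. \<exists>i j. e = {i, j} \<and> i \<noteq> j \<and> i < n \<and> j < n \<and> Cs ! i \<inter> Cs ! j \<noteq> {}"
    using cfD3[OF cf] unfolding n_def by blast
  have En: "\<forall>e\<in>E. n \<notin> e" using oldE by fastforce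
  have edges: "\<forall>e\<in>E'. \<exists>i j. e = {i, j} \<and> i \<noteq> j \<and> i < length Cs' \<and> j < length Cs' \<and>
                   Cs' ! i \<inter> Cs' ! j \<noteq> {}"
  proof
    fix e assume "e \<in> E'"
    then consider "e = {a, n}" | "e \<in> E" unfolding E'_def by blast
    then show "\<exists>i j. e = {i, j} \<and> i \<noteq> j \<and> i < length Cs' \<and> j < length Cs' \<and> Cs' ! i \<inter> Cs' ! j \<noteq> {}"
    proof cases
      case 1
      have "S \<subseteq> Cs' ! a \<inter> Cs' ! n" using nth'[OF an'] nthn Sa unfolding X_def by auto
      then have "Cs' ! a \<inter> Cs' ! n \<noteq> {}" using Sne by blast
      moreover have "a < length Cs'" "n < length Cs'" using an' len by simp_all
      ultimately have H: "e = {a,n} \<and> a \<noteq> n \<and> a < length Cs' \<and> n < length Cs' \<and> Cs' ! a \<inter> Cs' ! n \<noteq> {}"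
        using an 1 by (intro conjI)
      show ?thesis by (rule exI[where x=a], rule exI[where x=n], rule H)
    next
      case 2
      obtain i j where "e = {i, j}" "i \<noteq> j" "i < n" "j < n" "Cs ! i \<inter> Cs ! j \<noteq> {}"
        using bspec[OF oldE 2] by (elim exE conjE)
      then have "Cs' ! i \<inter> Cs' ! j \<noteq> {}" "i < length Cs'" "j < length Cs'" using nth' len by simp_all
      then have H: "e = {i, j} \<and> i \<noteq> j \<and> i < length Cs' \<and> j < length Cs' \<and> Cs' ! i \<inter> Cs' ! j \<noteq> {}"
        using \<open>e = {i, j}\<close> \<open>i \<noteq> j\<close> by simp
      show ?thesis by (rule exI[where x=i], rule exI[where x=j], rule H)
    qed
  qed
  have ac0: "acyclic_edges E" using cfD4[OF cf] .
  have ac: "acyclic_edges E'" unfolding E'_def using acyc_leaf[OF ac0 En an] .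
  have oldcip: "\<And>ys k. epath E ys \<Longrightarrow> k \<in> set ys \<Longrightarrow> Cs ! hd ys \<inter> Cs ! last ys \<subseteq> Cs ! k"
    using cfD5[OF cf] by blast
  have C: "\<And>ys k. epath E' ys \<Longrightarrow> hd ys = n \<Longrightarrow> 2 \<le> length ys \<Longrightarrow> k \<in> set ys \<Longrightarrow>
             Cs'!hd ys \<inter> Cs'!last ys \<subseteq> Cs'!k"
  proof -
    fix ys k assume p: "epath E' ys" and h: "hd ys = n" and l2: "2 \<le> length ys" and k: "k \<in> set ys"
    obtain y zs where ys: "ys = n # y # zs" using h l2 by (cases ys; cases "tl ys") auto
    define ws where "ws = y # zs"
    have pw': "epath E' ws" using epath_tl[OF p l2] unfolding ys ws_def by simp
    have nw: "n \<notin> set ws" using p unfolding epath_def ys ws_def by auto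
    have pw: "epath E ws" using epath_sub2[OF pw'[unfolded E'_def] nw] .
    have "{ys ! 0, ys ! Suc 0} \<in> E'" using p l2 unfolding epath_def by auto
    then have "{y, n} \<in> insert {a,n} E" unfolding ys E'_def by (simp add: insert_commute)
    then have ya: "y = a" using nbr[OF _ En an] by blast
    have wlt: "\<And>m. m \<in> set ws \<Longrightarrow> m < n"
    proof -
      fix m assume m: "m \<in> set ws"
      show "m < n"
      proof (cases "2 \<le> length ws")
        case True then show ?thesis using path_lt[OF cf pw True m] n_def by simp
      next
        case False then have "ws = [y]" unfolding ws_def by (cases zs) auto
        then show ?thesis using m ya an' by simp
      qed
    qed
    have lw: "last ys = last ws" unfolding ys ws_def by simp
    have lwin: "last ws \<in> set ws" unfolding ws_def by simp
    have hw: "hd ws = a" unfolding ws_def using ya by simp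
    have "Cs'!hd ys \<inter> Cs'!last ys = X \<inter> Cs!last ws" using h nthn lw nth'[OF wlt[OF lwin]] by simp
    also have "\<dots> \<subseteq> Cs!a \<inter> Cs!last ws" using Sa vi[OF wlt[OF lwin]] unfolding X_def by auto
    finally have I: "Cs'!hd ys \<inter> Cs'!last ys \<subseteq> Cs!hd ws \<inter> Cs!last ws" using hw by simp
    show "Cs'!hd ys \<inter> Cs'!last ys \<subseteq> Cs'!k"
    proof (cases "k = n")
      case True then show ?thesis using h by blast
    next
      case False
      then have kw: "k \<in> set ws" using k unfolding ys ws_def by auto
      then show ?thesis using I oldcip[OF pw kw] nth'[OF wlt[OF kw]] by blast
    qed
  qed
  have cip: "\<forall>xs. epath E' xs \<longrightarrow> (\<forall>k\<in>set xs. Cs' ! hd xs \<inter> Cs' ! last xs \<subseteq> Cs' ! k)"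
  proof (intro allI impI ballI)
    fix xs k assume p: "epath E' xs" and k: "k \<in> set xs"
    show "Cs' ! hd xs \<inter> Cs' ! last xs \<subseteq> Cs' ! k"
    proof (cases "2 \<le> length xs")
      case False
      then obtain x where "xs = [x]" using epath_single p by blast
      then show ?thesis using k by auto
    next
      case l2: True
      show ?thesis
      proof (cases "n \<in> set xs")
        case True
        then obtain j where j: "j < length xs" "xs ! j = n" by (auto simp: in_set_conv_nth)
        have ne: "xs \<noteq> []" using l2 by auto
        from leaf_end[OF p[unfolded E'_def] En an j] show ?thesis
        proof
          assume "j = 0"
          then have "hd xs = n" using j ne by (simp add: hd_conv_nth)
          then show ?thesis using C[OF p _ l2 k] by blast
        next
          assume "j = length xs - 1"
          then have "last xs = n" using j ne by (simp add: last_conv_nth)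
          then have "hd (rev xs) = n" by (simp add: hd_rev)
          moreover have "2 \<le> length (rev xs)" "k \<in> set (rev xs)" using l2 k by auto
          ultimately have "Cs'!hd (rev xs) \<inter> Cs'!last (rev xs) \<subseteq> Cs'!k"
            using C[OF epath_rev[OF p]] by blast
          then show ?thesis by (auto simp: hd_rev last_rev)
        qed
      next
        case False
        have pE: "epath E xs" using epath_sub2[OF p[unfolded E'_def] False] .
        have A: "\<forall>i<length Cs. \<forall>j<length Cs. i \<noteq> j \<longrightarrow> Cs'!i \<inter> Cs'!j \<subseteq> Cs!i \<inter> Cs!j"
          using nth' n_def by auto
        have B: "\<forall>i<length Cs. Cs!i \<subseteq> Cs'!i" using nth' n_def by auto
        show ?thesis using cip_transfer[OF cf pE A B k] .
      qed
    qed
  qed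
  have "\<forall>C\<in>set Cs'. C \<noteq> {}" using nemp unfolding Cs'_def X_def by auto
  moreover have "clique_forest Cs' E'" by (rule cfI[OF dist' cl' edges ac cip])
  ultimately show ?thesis unfolding inv_cf_def Cs'_def X_def E'_def n_def by blast
qed

lemma step_inv: "step p x y \<Longrightarrow> inv_cf (fst x) (snd x) \<Longrightarrow> inv_cf (fst y) (snd y)"
proof (induction rule: step.induct)
  case (proper a Cs v S E)
  have i: "inv_cf Cs E" using proper.prems by simp
  have vn: "v \<notin> \<Union>(set Cs)" using proper.hyps(2) by blast
  show ?case using inv_proper[OF i proper.hyps(1) vn proper.hyps(3) proper.hyps(4)] by simp
next
  case (full a Cs v E)
  have i: "inv_cf Cs E" using full.prems by simp
  have vn: "v \<notin> \<Union>(set Cs)" using full.hyps(2) by blast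
  show ?case using inv_full[OF i full.hyps(1) vn] by simp
next
  case (empty a Cs v E)
  have i: "inv_cf Cs E" using empty.prems by simp
  have vn: "v \<notin> \<Union>(set Cs)" using empty.hyps(2) by blast
  show ?case using inv_empty[OF i empty.hyps(1) vn] by simp
qed

lemma rtc_inv: "(step p)\<^sup>*\<^sup>* x y \<Longrightarrow> inv_cf (fst x) (snd x) \<Longrightarrow> inv_cf (fst y) (snd y)"
  by (induction rule: rtranclp_induct) (auto dest: step_inv)

theorem corollary14:
  fixes p :: nat and Cs0 Cs :: "nat set list" and E0 E :: "nat set set"
  assumes "Cs0 \<noteq> []"
    and "\<forall>C\<in>set Cs0. C \<noteq> {} \<and> C \<subseteq> {1..p}"
    and "perfect_sequence Cs0"
    and "clique_forest Cs0 E0"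
    and "(step p)\<^sup>*\<^sup>* (Cs0, E0) (Cs, E)"
    and "{1..p} - \<Union>(set Cs) = {}"
  shows "clique_forest Cs E"
proof -
  have "inv_cf Cs0 E0" using assms(2,4) unfolding inv_cf_def by blast
  then have "inv_cf Cs E" using rtc_inv[OF assms(5)] by simp
  then show ?thesis unfolding inv_cf_def by blast
qed

end
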